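(* Let $X$ be a separable metrizable space such that $C_p(X)$ is countable dense homogeneous. Then $X$ is a $\gamma$-set.
   Context: $C_p(X)$ is the space of continuous functions $X\to\mathbb{R}$ with the pointwise convergence topology. A space $Y$ is countable dense homogeneous if it is separable and for any two countable dense $D,E\subseteq Y$ there is a homeomorphism $h\colon Y\to Y$ with $h[D]=E$. An open cover $\mathcal{U}$ of $X$ is an $\omega$-cover if $X\notin\mathcal{U}$ and every finite subset of $X$ is contained in some member of $\mathcal{U}$; a countable open cover $\{U_n\}$ is a $\gamma$-cover if it is infinite and each point of $X$ lies in all but finitely many $U_n$. $X$ is a $\gamma$-set if every open $\omega$-cover of $X$ contains a $\gamma$-cover as a subfamily. *)

theory Defs
  imports "HOL-Analysis.Analysis"
begin

text \<open>C_p(X): real-valued continuous functions on X with the topology of pointwise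
convergence, i.e. the subspace of the product space R^X (functions are taken
extensional, i.e. undefined outside topspace X, as required by product_topology).\<close>
definition Cp :: "'a topology \<Rightarrow> ('a \<Rightarrow> real) topology" where
  "Cp X = subtopology (product_topology (\<lambda>_. euclideanreal) (topspace X))
            {f. continuous_map X euclideanreal f \<and> f \<in> extensional (topspace X)}"

definition countable_dense_homogeneous :: "'b topology \<Rightarrow> bool" where
  "countable_dense_homogeneous Y \<longleftrightarrow> separable_space Y \<and>
     (\<forall>D E. countable D \<and> D \<subseteq> topspace Y \<and> Y closure_of D = topspace Y \<and>
            countable E \<and> E \<subseteq> topspace Y \<and> Y closure_of E = topspace Y \<longrightarrow>
            (\<exists>h. homeomorphic_map Y Y h \<and> h ` D = E))"

definition open_cover :: "'a topology \<Rightarrow> 'a set set \<Rightarrow> bool" where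
  "open_cover X \<U> \<longleftrightarrow> (\<forall>U\<in>\<U>. openin X U) \<and> topspace X \<subseteq> \<Union>\<U>"

definition omega_cover :: "'a topology \<Rightarrow> 'a set set \<Rightarrow> bool" where
  "omega_cover X \<U> \<longleftrightarrow> open_cover X \<U> \<and> topspace X \<notin> \<U> \<and>
     (\<forall>F. finite F \<and> F \<subseteq> topspace X \<longrightarrow> (\<exists>U\<in>\<U>. F \<subseteq> U))"

definition gamma_cover :: "'a topology \<Rightarrow> 'a set set \<Rightarrow> bool" where
  "gamma_cover X \<U> \<longleftrightarrow> open_cover X \<U> \<and> countable \<U> \<and> infinite \<U> \<and>
     (\<forall>x\<in>topspace X. finite {U\<in>\<U>. x \<notin> U})"

definition gamma_set :: "'a topology \<Rightarrow> bool" where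
  "gamma_set X \<longleftrightarrow> (\<forall>\<U>. omega_cover X \<U> \<longrightarrow> (\<exists>\<V>\<subseteq>\<U>. gamma_cover X \<V>))"

end

theory Submission
  imports Defs
begin


lemma topspace_Cp:
  "topspace (Cp X) = {f. continuous_map X euclideanreal f \<and> f \<in> extensional (topspace X)}"
  unfolding Cp_def by (auto simp: topspace_subtopology PiE_def)

lemma restrict_in_Cp:
  assumes "continuous_map X euclideanreal f"
  shows "restrict f (topspace X) \<in> topspace (Cp X)"
proof -
  have "continuous_map X euclideanreal (restrict f (topspace X))"
    by (rule continuous_map_eq[OF assms]) auto
  then show ?thesis by (simp add: topspace_Cp)
qed

lemma Cp_pointwise_limit:
  assumes "limitin (Cp X) a l sequentially" "x \<in> topspace X"
  shows "(\<lambda>k. a k x) \<longlonglongrightarrow> l x"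
proof -
  have "limitin (product_topology (\<lambda>_. euclideanreal) (topspace X)) a l sequentially"
    using assms(1) unfolding Cp_def limitin_subtopology by blast
  then have "limitin euclideanreal (\<lambda>k. a k x) (l x) sequentially"
    using assms(2) unfolding limitin_componentwise by blast
  then show ?thesis by simp
qed

lemma Cp_const_limit:
  fixes c :: "nat \<Rightarrow> real"
  assumes "c \<longlonglongrightarrow> 0"
  shows "limitin (Cp X) (\<lambda>k. restrict (\<lambda>_. c k) (topspace X)) (restrict (\<lambda>_. 0) (topspace X)) sequentially"
proof -
  have mem: "\<And>r. restrict (\<lambda>_. r) (topspace X) \<in> topspace (Cp X)"
    by (rule restrict_in_Cp) simp
  show ?thesis
    unfolding Cp_def limitin_subtopology
  proof (intro conjI)
    show "restrict (\<lambda>_. 0) (topspace X) \<in> {f. continuous_map X euclideanreal f \<and> f \<in> extensional (topspace X)}"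
      using mem[of 0] by (simp add: topspace_Cp)
    show "\<forall>\<^sub>F k in sequentially. restrict (\<lambda>_. c k) (topspace X) \<in> {f. continuous_map X euclideanreal f \<and> f \<in> extensional (topspace X)}"
      using mem by (simp add: topspace_Cp)
    show "limitin (product_topology (\<lambda>_. euclideanreal) (topspace X)) (\<lambda>k. restrict (\<lambda>_. c k) (topspace X)) (restrict (\<lambda>_. 0) (topspace X)) sequentially"
      unfolding limitin_componentwise using assms by (auto simp: PiE_def)
  qed
qed

lemma eventually_big:
  fixes c e :: real
  assumes "c > 0"
  shows "\<forall>\<^sub>F n in sequentially. real n - (real n)^2 * c \<le> e"
proof -
  obtain N :: nat where N: "(1 + \<bar>e\<bar>) / c < real N"
    using reals_Archimedean2 by blast
  have "real n - (real n)^2 * c \<le> e" if "n \<ge> N" for n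
  proof -
    have "(1 + \<bar>e\<bar>) / c < real n" using N that by linarith
    then have h: "1 + \<bar>e\<bar> < real n * c" using assms by (simp add: field_simps)
    have n1: "real n \<ge> 1"
    proof -
      have "0 < (1 + \<bar>e\<bar>) / c" using assms by simp
      then have "0 < real n" using \<open>(1 + \<bar>e\<bar>) / c < real n\<close> by linarith
      then show ?thesis by simp
    qed
    have "real n * (1 + \<bar>e\<bar>) \<le> real n * (real n * c)"
      using h n1 by (intro mult_left_mono) auto
    moreover have "real n + \<bar>e\<bar> \<le> real n * (1 + \<bar>e\<bar>)"
      using n1 mult_left_mono[OF n1, of "\<bar>e\<bar>"] by (simp add: algebra_simps)
    ultimately show ?thesis by (simp add: power2_eq_square algebra_simps)
  qed
  then show ?thesis unfolding eventually_sequentially by blast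
qed


context Metric_space
begin

lemma dense_point:
  assumes "mtopology closure_of C = M" "x \<in> M" "e > 0"
  shows "\<exists>s\<in>C. d s x < e"
proof -
  have "x \<in> mtopology closure_of C" using assms by simp
  then obtain y where "y \<in> C" "y \<in> mball x e"
    unfolding in_closure_of using assms openin_mball by (meson centre_in_mball_iff)
  then show ?thesis using commute by auto
qed

lemma ball_in_open:
  assumes "mtopology closure_of C = M" "C \<subseteq> M" "openin mtopology U" "x \<in> U"
  shows "\<exists>s\<in>C. \<exists>k::nat. x \<in> mball s (inverse (real (Suc k))) \<and> mball s (inverse (real (Suc k))) \<subseteq> U"
proof -
  obtain r where r: "r > 0" "mball x r \<subseteq> U"
    using assms(3,4) openin_mtopology by blast
  have xM: "x \<in> M" using assms(3,4) openin_mtopology by blast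
  obtain k :: nat where k: "inverse (real (Suc k)) < r / 2"
    using r(1) by (metis half_gt_zero_iff reals_Archimedean)
  obtain s where s: "s \<in> C" "d s x < inverse (real (Suc k))"
    using dense_point[OF assms(1) xM, of "inverse (real (Suc k))"] by auto
  have sM: "s \<in> M" using s assms(2) by auto
  have "mball s (inverse (real (Suc k))) \<subseteq> mball x r"
  proof
    fix y assume "y \<in> mball s (inverse (real (Suc k)))"
    then have "y \<in> M" "d s y < inverse (real (Suc k))" by auto
    moreover have "d x y \<le> d x s + d s y" using triangle xM sM \<open>y \<in> M\<close> by blast
    ultimately show "y \<in> mball x r" using s k xM commute[of x s] by auto
  qed
  then show ?thesis using s sM xM r commute[of x s] by (intro bexI[of _ s] exI[of _ k]) auto
qed

lemma continuous_d: "a \<in> M \<Longrightarrow> continuous_map mtopology euclideanreal (d a)"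
  using continuous_on_mdist[of a "metric (M,d)"] by simp


lemma main:
  assumes sep: "separable_space mtopology"
    and cdh: "countable_dense_homogeneous (Cp mtopology)"
    and om: "omega_cover mtopology UU"
  shows "\<exists>V\<subseteq>UU. gamma_cover mtopology V"
proof -
  let ?X = "mtopology"
  let ?Y = "Cp mtopology"
  have tsX: "topspace ?X = M" by simp
  have UUopen: "\<And>U. U \<in> UU \<Longrightarrow> openin ?X U" using om unfolding omega_cover_def open_cover_def by blast
  have notM: "M \<notin> UU" using om unfolding omega_cover_def by simp
  have fin_cov: "\<And>F. finite F \<Longrightarrow> F \<subseteq> M \<Longrightarrow> \<exists>U\<in>UU. F \<subseteq> U"
    using om unfolding omega_cover_def by simp
  obtain C where C: "countable C" "C \<subseteq> M" "?X closure_of C = M"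
    using sep unfolding separable_space_def by auto
  have Mne: "M \<noteq> {}"
  proof
    assume "M = {}"
    obtain U where "U \<in> UU" using fin_cov[of "{}"] by auto
    then have "U \<subseteq> M" using UUopen openin_subset by fastforce
    then show False using \<open>M = {}\<close> \<open>U \<in> UU\<close> notM by auto
  qed
  define bl where "bl p = mball (fst p) (inverse (real (Suc (snd p))))" for p :: "'a \<times> nat"
  define J where "J = {B. finite B \<and> B \<subseteq> C \<times> UNIV \<and> (\<exists>U\<in>UU. \<Union>(bl ` B) \<subseteq> U)}"
  define Uof where "Uof B = (SOME U. U \<in> UU \<and> \<Union>(bl ` B) \<subseteq> U)" for B
  define phi where "phi B x = (\<Sum>p\<in>B. max 0 (inverse (real (Suc (snd p))) - d (fst p) x))" for B x
  have cJ: "countable J"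
    by (rule countable_subset[OF _ countable_Collect_finite_subset[of "C \<times> (UNIV::nat set)"]])
       (auto simp: J_def C(1))
  have JJne: "{} \<in> J" using fin_cov[of "{}"] by (auto simp: J_def)
  have Uof: "Uof B \<in> UU \<and> \<Union>(bl ` B) \<subseteq> Uof B" if "B \<in> J" for B
    unfolding Uof_def by (rule someI_ex) (use that in \<open>auto simp: J_def\<close>)
  have phi_cont: "continuous_map ?X euclideanreal (phi B)" if "B \<in> J" for B
  proof -
    have "\<And>p. p \<in> B \<Longrightarrow> fst p \<in> M" using that C(2) by (auto simp: J_def)
    moreover have "finite B" using that by (simp add: J_def)
    ultimately show ?thesis unfolding phi_def
      by (intro continuous_map_sum continuous_map_real_max continuous_map_diff continuous_map_const[THEN iffD2] continuous_d) auto
  qed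
  have phi_pos: "phi B x > 0" if "B \<in> J" "p \<in> B" "x \<in> bl p" for B p x
  proof -
    have "0 < max 0 (inverse (real (Suc (snd p))) - d (fst p) x)"
      using that(3) by (auto simp: bl_def)
    also have "\<dots> \<le> phi B x" unfolding phi_def
      by (rule member_le_sum) (use that in \<open>auto simp: J_def\<close>)
    finally show ?thesis .
  qed
  have phi_zero: "phi B x \<le> 0" if "B \<in> J" "x \<in> M" "x \<notin> Uof B" for B x
  proof -
    have "\<And>p. p \<in> B \<Longrightarrow> x \<notin> bl p" using Uof[OF that(1)] that(3) by blast
    then have "\<And>p. p \<in> B \<Longrightarrow> max 0 (inverse (real (Suc (snd p))) - d (fst p) x) = 0"
      using that(1,2) C(2) by (fastforce simp: bl_def J_def)
    then show ?thesis unfolding phi_def by simp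
  qed
  obtain D0 where D0: "countable D0" "D0 \<subseteq> topspace ?Y" "?Y closure_of D0 = topspace ?Y"
    using cdh unfolding countable_dense_homogeneous_def separable_space_def by auto
  have zY: "restrict (\<lambda>_. 0::real) M \<in> topspace ?Y"
    using restrict_in_Cp[of ?X "\<lambda>_. 0"] by simp
  have D0ne: "D0 \<noteq> {}" using D0(3) zY by auto
  define dd where "dd = from_nat_into D0"
  define BB where "BB = from_nat_into J"
  define ii where "ii n = fst (prod_decode (fst (prod_decode n)))" for n
  define jj where "jj n = snd (prod_decode (fst (prod_decode n)))" for n
  define fn where "fn n = restrict (\<lambda>x. max (dd (ii n) x) (real n - (real n)^2 * phi (BB (jj n)) x)) M" for n
  have dd: "dd i \<in> topspace ?Y" for i using D0ne D0(2) from_nat_into[OF D0ne] by (auto simp: dd_def)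
  have BB: "BB j \<in> J" for j using JJne from_nat_into[of J] by (auto simp: BB_def)
  have fnY: "fn n \<in> topspace ?Y" for n
  proof -
    have "continuous_map ?X euclideanreal (dd (ii n))" using dd by (simp add: topspace_Cp)
    then have "continuous_map ?X euclideanreal (\<lambda>x. max (dd (ii n) x) (real n - (real n)^2 * phi (BB (jj n)) x))"
      using phi_cont[OF BB] by (intro continuous_map_real_max continuous_map_diff continuous_map_real_mult) auto
    then show ?thesis unfolding fn_def using restrict_in_Cp[of ?X] by simp
  qed
  define D where "D = range fn"
  have DY: "D \<subseteq> topspace ?Y" using fnY by (auto simp: D_def)
  define CpS where "CpS = {f. continuous_map ?X euclideanreal f \<and> f \<in> extensional M}"
  have Yeq: "?Y = subtopology (product_topology (\<lambda>_. euclideanreal) M) CpS"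
    by (simp add: Cp_def CpS_def)
  have tsY: "topspace ?Y = CpS" by (simp add: topspace_Cp CpS_def)
  have Ddense: "?Y closure_of D = topspace ?Y"
  proof
    show "?Y closure_of D \<subseteq> topspace ?Y" by (rule closure_of_subset_topspace)
    show "topspace ?Y \<subseteq> ?Y closure_of D"
    proof
      fix g assume g: "g \<in> topspace ?Y"
      show "g \<in> ?Y closure_of D" unfolding in_closure_of
      proof (intro conjI allI impI)
        show "g \<in> topspace ?Y" by (rule g)
        fix T assume T: "g \<in> T \<and> openin ?Y T"
        then obtain T' where T': "openin (product_topology (\<lambda>_. euclideanreal) M) T'" "T = T' \<inter> CpS"
          unfolding Yeq openin_subtopology by blast
        have "g \<in> T'" using T T' by blast
        then obtain U where U: "finite {x\<in>M. U x \<noteq> topspace euclideanreal}"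
            "\<forall>x\<in>M. openin euclideanreal (U x)" "g \<in> PiE M U" "PiE M U \<subseteq> T'"
          using T'(1) unfolding openin_product_topology_alt by blast
        define S where "S = PiE M U \<inter> CpS"
        have "openin (product_topology (\<lambda>_. euclideanreal) M) (PiE M U)"
          unfolding openin_product_topology_alt using U(1,2) by blast
        then have Sopen: "openin ?Y S" unfolding Yeq openin_subtopology S_def by blast
        have gS: "g \<in> S" using g U(3) tsY by (simp add: S_def)
        have "g \<in> ?Y closure_of D0" using D0(3) g by simp
        then obtain d where d: "d \<in> D0" "d \<in> S"
          using gS Sopen unfolding in_closure_of by blast
        obtain i where i: "dd i = d" using from_nat_into_surj[OF D0(1) d(1)] by (auto simp: dd_def)
        define G where "G = {x\<in>M. U x \<noteq> topspace euclideanreal}"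
        have Gfin: "finite G" "G \<subseteq> M" using U(1) by (auto simp: G_def)
        obtain W where W: "W \<in> UU" "G \<subseteq> W" using fin_cov[OF Gfin] by blast
        have "\<forall>x\<in>G. \<exists>p. p \<in> C \<times> UNIV \<and> x \<in> bl p \<and> bl p \<subseteq> W"
        proof
          fix x assume "x \<in> G"
          then obtain s k where "s \<in> C" "x \<in> mball s (inverse (real (Suc k)))"
              "mball s (inverse (real (Suc k))) \<subseteq> W"
            using ball_in_open[OF C(3) C(2) UUopen[OF W(1)]] W(2) by blast
          then show "\<exists>p. p \<in> C \<times> UNIV \<and> x \<in> bl p \<and> bl p \<subseteq> W"
            by (intro exI[of _ "(s,k)"]) (auto simp: bl_def)
        qed
        from bchoice[OF this] obtain pp where pp: "\<forall>x\<in>G. pp x \<in> C \<times> UNIV \<and> x \<in> bl (pp x) \<and> bl (pp x) \<subseteq> W"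
          by blast
        define B where "B = pp ` G"
        have BJ: "B \<in> J" unfolding J_def B_def using pp Gfin W by blast
        obtain j where j: "BB j = B" using from_nat_into_surj[OF cJ BJ] by (auto simp: BB_def)
        have phiG: "\<forall>x\<in>G. phi B x > 0"
        proof
          fix x assume "x \<in> G"
          then show "phi B x > 0" using pp phi_pos[OF BJ, of "pp x" x] by (auto simp: B_def)
        qed
        have "\<forall>\<^sub>F n in sequentially. \<forall>x\<in>G. real n - (real n)^2 * phi B x \<le> d x"
          using phiG eventually_big Gfin(1) by (simp add: eventually_ball_finite)
        then obtain N where N: "\<And>n. n \<ge> N \<Longrightarrow> \<forall>x\<in>G. real n - (real n)^2 * phi B x \<le> d x"
          unfolding eventually_sequentially by blast
        define n where "n = prod_encode (prod_encode (i,j), N)"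
        have nij: "ii n = i" "jj n = j" "n \<ge> N"
          by (auto simp: n_def ii_def jj_def le_prod_encode_2)
        have "fn n \<in> PiE M U"
        proof -
          have "fn n x \<in> U x" if "x \<in> M" for x
          proof (cases "x \<in> G")
            case True
            then have "fn n x = d x" using N[OF nij(3)] that nij i j by (auto simp: fn_def)
            then show ?thesis using d(2) that by (auto simp: S_def PiE_iff)
          next
            case False
            then show ?thesis using that by (auto simp: G_def)
          qed
          then show ?thesis by (auto simp: PiE_iff fn_def)
        qed
        then have "fn n \<in> T" using fnY tsY U(4) T'(2) by auto
        then show "\<exists>y. y \<in> D \<and> y \<in> T" by (auto simp: D_def)
      qed
    qed
  qed
  define cc where "cc k = restrict (\<lambda>_. inverse (real (Suc k))) M" for k :: nat
  define E where "E = D \<union> range cc"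
  have ccY: "cc k \<in> topspace ?Y" for k
    using restrict_in_Cp[of ?X "\<lambda>_. inverse (real (Suc k))"] by (simp add: cc_def)
  have cD: "countable D" by (simp add: D_def)
  have cE: "countable E" by (simp add: E_def D_def)
  have EY: "E \<subseteq> topspace ?Y" using DY ccY by (auto simp: E_def)
  have Edense: "?Y closure_of E = topspace ?Y"
  proof
    show "?Y closure_of E \<subseteq> topspace ?Y" by (rule closure_of_subset_topspace)
    have "?Y closure_of D \<subseteq> ?Y closure_of E" by (rule closure_of_mono) (auto simp: E_def)
    then show "topspace ?Y \<subseteq> ?Y closure_of E" using Ddense by simp
  qed
  obtain h where h: "homeomorphic_map ?Y ?Y h" "h ` D = E"
    using cdh cD DY Ddense cE EY Edense unfolding countable_dense_homogeneous_def by blast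
  obtain g where hg: "homeomorphic_maps ?Y ?Y h g" using h(1) homeomorphic_map_maps by blast
  have "\<forall>k. \<exists>n. h (fn n) = cc k"
  proof
    fix k
    have "cc k \<in> h ` D" using h(2) by (simp add: E_def)
    then show "\<exists>n. h (fn n) = cc k" by (auto simp: D_def)
  qed
  then obtain nk where nk: "\<And>k. h (fn (nk k)) = cc k" by metis
  have fnk: "fn (nk k) = g (cc k)" for k
    using hg fnY[of "nk k"] nk[of k] unfolding homeomorphic_maps_def by metis
  define z where "z = restrict (\<lambda>_. 0::real) M"
  have limc: "limitin ?Y cc z sequentially"
    using Cp_const_limit[OF LIMSEQ_inverse_real_of_nat, of ?X] unfolding cc_def[abs_def] z_def by simp
  have gcont: "continuous_map ?Y ?Y g" using hg unfolding homeomorphic_maps_def by blast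
  define F where "F = g z"
  have "limitin ?Y (g \<circ> cc) F sequentially"
    unfolding F_def by (rule continuous_map_limit[OF gcont limc])
  then have limk: "limitin ?Y (\<lambda>k. fn (nk k)) F sequentially"
    using fnk by (simp add: o_def)
  have lim: "(\<lambda>k. fn (nk k) x) \<longlonglongrightarrow> F x" if "x \<in> M" for x
    using Cp_pointwise_limit[OF limk] that by simp
  obtain x0 where x0: "x0 \<in> M" using Mne by blast
  have injnk: "inj nk"
  proof (rule injI)
    fix a b assume "nk a = nk b"
    then have "cc a = cc b" using nk by metis
    then have "cc a x0 = cc b x0" by simp
    then show "a = b" using x0 by (simp add: cc_def)
  qed
  define Uk where "Uk k = Uof (BB (jj (nk k)))" for k
  have UkUU: "Uk k \<in> UU" for k using Uof[OF BB] by (simp add: Uk_def)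
  have fin: "finite {k. x \<notin> Uk k}" if x: "x \<in> M" for x
  proof -
    have "\<forall>\<^sub>F k in sequentially. fn (nk k) x < F x + 1"
      using order_tendstoD(2)[OF lim[OF x], of "F x + 1"] by simp
    then have A: "finite {k. \<not> fn (nk k) x < F x + 1}"
      by (simp add: cofinite_eq_sequentially[symmetric] eventually_cofinite)
    have B: "finite {k. real (nk k) \<le> F x + 1}"
    proof (rule finite_subset)
      show "{k. real (nk k) \<le> F x + 1} \<subseteq> nk -` {..nat \<lceil>F x + 1\<rceil>}"
      proof
        fix k assume "k \<in> {k. real (nk k) \<le> F x + 1}"
        then have "real (nk k) \<le> real_of_int \<lceil>F x + 1\<rceil>"
          using le_of_int_ceiling[of "F x + 1"] by (metis mem_Collect_eq order_trans)
        then have "int (nk k) \<le> \<lceil>F x + 1\<rceil>" by linarith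
        then show "k \<in> nk -` {..nat \<lceil>F x + 1\<rceil>}" by (simp add: le_nat_iff)
      qed
      show "finite (nk -` {..nat \<lceil>F x + 1\<rceil>})"
        using injnk by (intro finite_vimageI) auto
    qed
    have "{k. x \<notin> Uk k} \<subseteq> {k. \<not> fn (nk k) x < F x + 1} \<union> {k. real (nk k) \<le> F x + 1}"
    proof
      fix k assume "k \<in> {k. x \<notin> Uk k}"
      then have "phi (BB (jj (nk k))) x \<le> 0" using phi_zero[OF BB x] by (simp add: Uk_def)
      then have "(real (nk k))^2 * phi (BB (jj (nk k))) x \<le> 0" by (simp add: mult_nonneg_nonpos)
      then have "fn (nk k) x \<ge> real (nk k)" using x by (simp add: fn_def)
      then show "k \<in> {k. \<not> fn (nk k) x < F x + 1} \<union> {k. real (nk k) \<le> F x + 1}" by auto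
    qed
    then show ?thesis using A B by (meson finite_UnI finite_subset)
  qed
  have notin_fin: "\<exists>k\<in>K. x \<in> Uk k" if KK: "infinite K" "x \<in> M" for K x
  proof -
    obtain k where "k \<in> K - {k. x \<notin> Uk k}" using KK fin[OF KK(2)]
      by (metis Diff_infinite_finite ex_in_conv finite.emptyI)
    then show ?thesis by blast
  qed
  define V where "V = range Uk"
  have "gamma_cover ?X V"
    unfolding gamma_cover_def open_cover_def
  proof (intro conjI ballI)
    show "\<And>U. U \<in> V \<Longrightarrow> openin ?X U" using UkUU UUopen by (auto simp: V_def)
    show "topspace ?X \<subseteq> \<Union>V" using notin_fin[of UNIV] by (auto simp: V_def)
    show "countable V" by (simp add: V_def)
    show "infinite V"
    proof
      assume "finite V"
      then obtain k0 where k0: "infinite {k. Uk k = Uk k0}"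
        using pigeonhole_infinite[of "UNIV :: nat set" Uk] by (auto simp: V_def)
      have "M \<subseteq> Uk k0"
      proof
        fix x assume "x \<in> M"
        then obtain k where "Uk k = Uk k0" "x \<in> Uk k" using notin_fin[OF k0] by auto
        then show "x \<in> Uk k0" by simp
      qed
      moreover have "Uk k0 \<subseteq> M" using UUopen[OF UkUU[of k0]] openin_subset by fastforce
      ultimately show False using UkUU[of k0] notM by auto
    qed
    fix x assume "x \<in> topspace ?X"
    then have "finite (Uk ` {k. x \<notin> Uk k})" using fin by simp
    moreover have "{U \<in> V. x \<notin> U} \<subseteq> Uk ` {k. x \<notin> Uk k}" by (auto simp: V_def)
    ultimately show "finite {U \<in> V. x \<notin> U}" by (rule finite_subset[rotated])
  qed
  moreover have "V \<subseteq> UU" using UkUU by (auto simp: V_def)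
  ultimately show ?thesis by blast
qed

end


theorem mainTheorem17:
  fixes X :: "'a topology"
  assumes "separable_space X" and "metrizable_space X"
    and "countable_dense_homogeneous (Cp X)"
  shows "gamma_set X"
proof -
  obtain M d where md: "Metric_space M d" "X = Metric_space.mtopology M d"
    using assms(2) unfolding metrizable_space_def by blast
  have s: "separable_space (Metric_space.mtopology M d)" using assms(1) md(2) by simp
  have c: "countable_dense_homogeneous (Cp (Metric_space.mtopology M d))" using assms(3) md(2) by simp
  show ?thesis
    unfolding gamma_set_def
  proof (intro allI impI)
    fix UU assume "omega_cover X UU"
    then have "omega_cover (Metric_space.mtopology M d) UU" using md(2) by simp
    from Metric_space.main[OF md(1) s c this] show "\<exists>V\<subseteq>UU. gamma_cover X V" using md(2) by simp
  qed
qed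

end
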